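(* Let $U=[a_1,b_1]\cup\dots\cup[a_k,b_k]\subseteq\mathbb{R}$ with $a_1\le b_1<a_2\le b_2<\dots<a_k\le b_k$. Suppose $f=\sum_{i=0}^{2d}a_i(x)y^i\in\mathbb{R}[x,y]$ is non-negative on $U\times\mathbb{R}$, has only finitely many zeros in $U\times\mathbb{R}$, and $a_{2d}(x)>0$ for all $x\in U$. Then there exists $\epsilon(x)\in\mathbb{R}[x]$ with $\epsilon(x)\ge0$ on $U$ such that $f(x,y)\ge\epsilon(x)(1+y^2)^d$ for all $(x,y)\in U\times\mathbb{R}$, and for each $x\in U$, $\epsilon(x)=0$ if and only if there exists $y\in\mathbb{R}$ with $f(x,y)=0$. *)

theory Defs
  imports Complex_Main "HOL-Computational_Algebra.Polynomial"
begin

definition biv_eval :: "(nat \<Rightarrow> real poly) \<Rightarrow> nat \<Rightarrow> real \<Rightarrow> real \<Rightarrow> real" where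
  "biv_eval c d x y = (\<Sum>i\<le>2*d. poly (c i) x * y ^ i)"

end

theory Submission imports Defs "Jordan_Normal_Form.Char_Poly" "HOL-Analysis.Analysis" begin

definition ev2 :: "real poly poly \<Rightarrow> real \<Rightarrow> real \<Rightarrow> real" where
  "ev2 p x z = poly (map_poly (\<lambda>q. poly q x) p) z"

lemma ev2_mult: "ev2 (p * q) x z = ev2 p x z * ev2 q x z"
proof -
  interpret h: map_poly_comm_ring_hom "\<lambda>q. poly q x" by unfold_locales auto
  show ?thesis unfolding ev2_def by (simp add: h.hom_mult)
qed

lemma ev2_add: "ev2 (p + q) x z = ev2 p x z + ev2 q x z"
proof -
  interpret h: map_poly_comm_ring_hom "\<lambda>q. poly q x" by unfold_locales auto
  show ?thesis unfolding ev2_def by (simp add: h.hom_add)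
qed

lemma ev2_smult: "ev2 (Polynomial.smult c p) x z = poly c x * ev2 p x z"
  unfolding ev2_def by (simp add: poly_hom.map_poly_hom_smult)

lemma ev2_monom1: "ev2 (monom 1 i) x z = z ^ i"
  unfolding ev2_def by (simp add: poly_hom.map_poly_hom_monom poly_monom)

lemma poly_low: fixes P :: "real poly" assumes "degree P < n" shows "poly P z = (\<Sum>j<n. coeff P j * z ^ j)"
proof -
  have "poly P z = (\<Sum>j\<le>degree P. coeff P j * z ^ j)" by (rule poly_altdef)
  also have "\<dots> = (\<Sum>j<n. coeff P j * z ^ j)"
    by (rule sum.mono_neutral_left) (use assms in \<open>auto simp: coeff_eq_0\<close>)
  finally show ?thesis .
qed

lemma ev2_low: assumes "degree p < n" shows "ev2 p x z = (\<Sum>j<n. poly (coeff p j) x * z ^ j)"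
proof -
  have dg: "degree (map_poly (\<lambda>q. poly q x) p) < n" using assms degree_map_poly_le[of "\<lambda>q. poly q x" p] by linarith
  show ?thesis unfolding ev2_def poly_low[OF dg] by (simp add: coeff_map_poly)
qed

lemma eigen_key:
  fixes Fp :: "real poly poly"
  assumes deg: "degree (pderiv Fp) \<ge> 1"
  shows "\<exists>(ch::real poly poly) K n. coeff ch n = 1 \<and> degree ch = n \<and>
     (\<forall>x z. ev2 (pderiv Fp) x z = 0 \<longrightarrow>
        ev2 ch x (poly (lead_coeff (pderiv Fp)) x ^ K * ev2 Fp x z) = 0)"
proof -
  define G where "G = pderiv Fp"
  define n where "n = degree G"
  define Lc where "Lc = lead_coeff G"
  have G0: "G \<noteq> 0" using deg unfolding G_def by auto
  define Q where "Q i = fst (pseudo_divmod (monom 1 i * Fp) G)" for i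
  define R where "R i = snd (pseudo_divmod (monom 1 i * Fp) G)" for i
  define e where "e i = Suc (degree (monom 1 i * Fp)) - degree G" for i
  define K where "K = (\<Sum>i<n. e i)"
  have divid: "Polynomial.smult (Lc ^ e i) (monom 1 i * Fp) = G * Q i + R i" for i
    using pseudo_divmod(1)[OF G0, of "monom 1 i * Fp" "Q i" "R i"]
    unfolding Q_def R_def e_def Lc_def by simp
  have Rdeg: "degree (R i) < n" for i
    using pseudo_divmod(2)[OF G0, of "monom 1 i * Fp" "Q i" "R i"] deg
    unfolding Q_def R_def n_def G_def by auto
  have eK: "i < n \<Longrightarrow> e i \<le> K" for i unfolding K_def
    by (rule member_le_sum) auto
  define M where "M = Matrix.mat n n (\<lambda>(i,j). Lc ^ (K - e i) * coeff (R i) j)"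
  have Mc: "M \<in> carrier_mat n n" unfolding M_def by auto
  define ch where "ch = char_poly M"
  have mon: "degree ch = n \<and> coeff ch n = 1" unfolding ch_def by (rule degree_monic_char_poly[OF Mc])
  have main: "ev2 ch x (poly Lc x ^ K * ev2 Fp x z) = 0" if z: "ev2 G x z = 0" for x z
  proof -
    define lam where "lam = poly Lc x ^ K * ev2 Fp x z"
    define Mx where "Mx = map_mat (\<lambda>q. poly q x) M"
    have Mxc: "Mx \<in> carrier_mat n n" unfolding Mx_def using Mc by auto
    define v where "v = Matrix.vec n (\<lambda>j. z ^ j)"
    have n1: "n \<ge> 1" using deg unfolding n_def G_def .
    have row: "(Mx *\<^sub>v v) $ i = lam * v $ i" if i: "i < n" for i
    proof -
      have "(Mx *\<^sub>v v) $ i = (\<Sum>j<n. poly (Lc ^ (K - e i) * coeff (R i) j) x * z ^ j)"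
        using i Mxc unfolding Mx_def M_def v_def
        by (simp add: scalar_prod_def atLeast0LessThan)
      also have "\<dots> = poly Lc x ^ (K - e i) * (\<Sum>j<n. poly (coeff (R i) j) x * z ^ j)"
        by (simp add: sum_distrib_left poly_power mult.assoc)
      also have "(\<Sum>j<n. poly (coeff (R i) j) x * z ^ j) = ev2 (R i) x z"
        by (rule ev2_low[symmetric, OF Rdeg])
      also have "ev2 (R i) x z = poly Lc x ^ e i * (z ^ i * ev2 Fp x z)"
      proof -
        have "ev2 (Polynomial.smult (Lc ^ e i) (monom 1 i * Fp)) x z = ev2 (G * Q i + R i) x z"
          by (simp add: divid)
        thus ?thesis using z by (simp add: ev2_smult ev2_mult ev2_add ev2_monom1 poly_power)
      qed
      finally have "(Mx *\<^sub>v v) $ i = poly Lc x ^ (K - e i) * poly Lc x ^ e i * (z ^ i * ev2 Fp x z)"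
        by simp
      also have "\<dots> = lam * v $ i" using eK[OF i] i unfolding lam_def v_def
        by (simp add: power_add[symmetric])
      finally show ?thesis .
    qed
    have ev: "eigenvector Mx v lam"
      unfolding eigenvector_def
    proof (intro conjI)
      show "v \<in> carrier_vec (dim_row Mx)" using Mxc unfolding v_def by auto
      show "v \<noteq> 0\<^sub>v (dim_row Mx)"
      proof
        assume "v = 0\<^sub>v (dim_row Mx)"
        hence "v $ 0 = 0" using n1 Mxc by auto
        thus False using n1 unfolding v_def by auto
      qed
      show "Mx *\<^sub>v v = lam \<cdot>\<^sub>v v"
        by (rule eq_vecI) (use row Mxc in \<open>auto simp: v_def\<close>)
    qed
    hence "eigenvalue Mx lam" unfolding eigenvalue_def by auto
    hence "poly (char_poly Mx) lam = 0" using eigenvalue_root_char_poly[OF Mxc] by simp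
    moreover have "char_poly Mx = map_poly (\<lambda>q. poly q x) ch"
      unfolding Mx_def ch_def by (rule comm_ring_hom.char_poly_hom[OF poly_hom.comm_ring_hom_axioms Mc])
    ultimately show ?thesis unfolding ev2_def lam_def by simp
  qed
  show ?thesis using mon main unfolding G_def Lc_def by blast
qed


lemma root_small:
  fixes p :: "real poly" and lam :: real
  assumes low: "\<And>j. j < j0 \<Longrightarrow> coeff p j = 0" and r: "poly p lam = 0"
    and l0: "0 < lam" and l1: "lam \<le> 1" and dg: "degree p \<le> D"
  shows "\<bar>coeff p j0\<bar> \<le> lam * (\<Sum>j\<le>D. \<bar>coeff p j\<bar>)"
proof (cases "j0 \<le> D")
  case False
  hence "coeff p j0 = 0" using dg by (auto intro: coeff_eq_0)
  thus ?thesis using l0 by (simp add: sum_nonneg)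
next
  case True
  let ?a = "\<lambda>j. coeff p j"
  have "poly p lam = (\<Sum>j<Suc D. ?a j * lam ^ j)" by (rule poly_low) (use dg in auto)
  also have "{..<Suc D} = {..<j0} \<union> {j0} \<union> {j0<..D}" using True by auto
  also have "(\<Sum>j\<in>{..<j0} \<union> {j0} \<union> {j0<..D}. ?a j * lam ^ j)
      = (\<Sum>j\<in>{..<j0}. ?a j * lam ^ j) + ?a j0 * lam ^ j0 + (\<Sum>j\<in>{j0<..D}. ?a j * lam ^ j)"
    by (subst sum.union_disjoint, auto)+
  also have "(\<Sum>j\<in>{..<j0}. ?a j * lam ^ j) = 0" using low by simp
  finally have eq: "?a j0 * lam ^ j0 = - (\<Sum>j\<in>{j0<..D}. ?a j * lam ^ j)" using r by simp
  have "\<bar>?a j0\<bar> * lam ^ j0 = \<bar>\<Sum>j\<in>{j0<..D}. ?a j * lam ^ j\<bar>"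
    using eq l0 by (metis abs_minus_cancel abs_mult abs_of_pos zero_less_power)
  also have "\<dots> \<le> (\<Sum>j\<in>{j0<..D}. \<bar>?a j\<bar> * lam ^ j)"
    by (rule order_trans[OF sum_abs]) (use l0 in \<open>simp add: abs_mult\<close>)
  also have "\<dots> \<le> (\<Sum>j\<in>{j0<..D}. \<bar>?a j\<bar> * lam ^ Suc j0)"
  proof (rule sum_mono)
    fix j assume "j \<in> {j0<..D}"
    hence "lam ^ j \<le> lam ^ Suc j0" using l0 l1 by (intro power_decreasing) auto
    thus "\<bar>?a j\<bar> * lam ^ j \<le> \<bar>?a j\<bar> * lam ^ Suc j0" by (simp add: mult_left_mono)
  qed
  also have "\<dots> \<le> (\<Sum>j\<le>D. \<bar>?a j\<bar>) * lam ^ Suc j0"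
    unfolding sum_distrib_right[symmetric]
    by (rule mult_right_mono[OF sum_mono2]) (use l0 in auto)
  finally have "\<bar>?a j0\<bar> * lam ^ j0 \<le> (lam * (\<Sum>j\<le>D. \<bar>?a j\<bar>)) * lam ^ j0"
    by (simp add: algebra_simps)
  thus ?thesis using l0 by simp
qed



lemma cont_bound:
  fixes g :: "'a::topological_space \<Rightarrow> real"
  assumes "compact U" "continuous_on U g" shows "\<exists>B. \<forall>x\<in>U. g x \<le> B"
proof -
  have "compact (g ` U)" by (rule compact_continuous_image) (use assms in auto)
  hence "bounded (g ` U)" by (rule compact_imp_bounded)
  then obtain B where "\<forall>y\<in>g ` U. norm y \<le> B" by (auto simp: bounded_iff)
  hence "\<forall>x\<in>U. g x \<le> B" by fastforce
  thus ?thesis by blast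
qed

lemma cont_posmin:
  fixes g :: "'a::topological_space \<Rightarrow> real"
  assumes "compact S" "continuous_on S g" "\<And>x. x \<in> S \<Longrightarrow> g x > 0"
  shows "\<exists>m>0. \<forall>x\<in>S. g x \<ge> m"
proof (cases "S = {}")
  case True thus ?thesis by (intro exI[of _ 1]) auto
next
  case False
  from continuous_attains_inf[OF assms(1) False assms(2)] obtain x0 where
    "x0 \<in> S" "\<forall>y\<in>S. g x0 \<le> g y" by blast
  thus ?thesis using assms(3) by (intro exI[of _ "g x0"]) auto
qed

lemma biv_split: "biv_eval c d x y = poly (c (2*d)) x * y^(2*d) + (\<Sum>i<2*d. poly (c i) x * y^i)"
  unfolding biv_eval_def lessThan_Suc_atMost[symmetric] by simp

lemma large_y:
  fixes lo B :: real
  assumes lo: "lo > 0" and B: "B \<ge> 0" and cl: "poly (c (2*d)) x \<ge> lo"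
    and cB: "(\<Sum>i<2*d. \<bar>poly (c i) x\<bar>) \<le> B" and y: "\<bar>y\<bar> \<ge> max 1 (2*B/lo)"
  shows "biv_eval c d x y \<ge> lo/2^(Suc d) * (1+y^2)^d"
proof (cases "d = 0")
  case True
  thus ?thesis using cl lo by (simp add: biv_eval_def)
next
  case False
  have y1: "\<bar>y\<bar> \<ge> 1" using y by simp
  have "2*B/lo \<le> \<bar>y\<bar>" using y by simp
  hence yB: "2*B \<le> lo * \<bar>y\<bar>" using lo by (simp add: field_simps)
  have s: "\<bar>\<Sum>i<2*d. poly (c i) x * y^i\<bar> \<le> B * \<bar>y\<bar>^(2*d-1)"
  proof -
    have "\<bar>\<Sum>i<2*d. poly (c i) x * y^i\<bar> \<le> (\<Sum>i<2*d. \<bar>poly (c i) x\<bar> * \<bar>y\<bar>^i)"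
      by (rule order_trans[OF sum_abs]) (simp add: abs_mult power_abs)
    also have "\<dots> \<le> (\<Sum>i<2*d. \<bar>poly (c i) x\<bar> * \<bar>y\<bar>^(2*d-1))"
      by (rule sum_mono, rule mult_left_mono, rule power_increasing) (use y1 in auto)
    also have "\<dots> = (\<Sum>i<2*d. \<bar>poly (c i) x\<bar>) * \<bar>y\<bar>^(2*d-1)" by (simp add: sum_distrib_right)
    also have "\<dots> \<le> B * \<bar>y\<bar>^(2*d-1)" by (rule mult_right_mono[OF cB]) simp
    finally show ?thesis .
  qed
  have ev: "y^(2*d) = \<bar>y\<bar>^(2*d)" by (simp add: power_even_abs)
  have lead: "poly (c (2*d)) x * y^(2*d) \<ge> lo * \<bar>y\<bar>^(2*d)"
    unfolding ev by (rule mult_right_mono[OF cl]) simp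
  have split: "\<bar>y\<bar>^(2*d) = \<bar>y\<bar> * \<bar>y\<bar>^(2*d-1)" proof -
    have "2*d = Suc (2*d-1)" using False by simp
    thus ?thesis by (metis power_Suc)
  qed
  have "biv_eval c d x y \<ge> lo * \<bar>y\<bar>^(2*d) - B * \<bar>y\<bar>^(2*d-1)"
    using lead s unfolding biv_split by linarith
  also have "lo * \<bar>y\<bar>^(2*d) - B * \<bar>y\<bar>^(2*d-1) = \<bar>y\<bar>^(2*d-1) * (lo * \<bar>y\<bar> - B)"
    unfolding split by (simp add: algebra_simps)
  also have "\<dots> \<ge> \<bar>y\<bar>^(2*d-1) * (lo * \<bar>y\<bar> / 2)"
    by (rule mult_left_mono) (use yB in auto)
  also have "\<bar>y\<bar>^(2*d-1) * (lo * \<bar>y\<bar> / 2) = lo/2 * \<bar>y\<bar>^(2*d)"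
    unfolding split by (simp add: algebra_simps)
  finally have A: "biv_eval c d x y \<ge> lo/2 * \<bar>y\<bar>^(2*d)" .
  have y2: "1 \<le> y^2" proof -
    have "1 \<le> \<bar>y\<bar>^2" by (rule one_le_power[OF y1])
    thus ?thesis by simp
  qed
  have "(1+y^2)^d \<le> (2*y^2)^d" by (rule power_mono) (use y2 in auto)
  also have "\<dots> = 2^d * \<bar>y\<bar>^(2*d)" by (simp add: power_mult_distrib power_mult)
  finally have "lo/2^(Suc d) * (1+y^2)^d \<le> lo/2^(Suc d) * (2^d * \<bar>y\<bar>^(2*d))"
    by (rule mult_left_mono) (use lo in auto)
  also have "\<dots> = lo/2 * \<bar>y\<bar>^(2*d)" by simp
  finally show ?thesis using A by linarith
qed


lemma cpoly[continuous_intros]: "continuous_on A f \<Longrightarrow> continuous_on A (\<lambda>x. poly p (f x :: real))"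
  by (rule continuous_on_poly)

lemma biv_ev2: "biv_eval c d x y = ev2 (\<Sum>i\<le>2*d. monom (c i) i) x y"
proof -
  interpret h: map_poly_comm_ring_hom "\<lambda>q. poly q x" by unfold_locales auto
  show ?thesis unfolding ev2_def biv_eval_def
    by (simp add: h.hom_sum poly_sum poly_hom.map_poly_hom_monom poly_monom)
qed

lemma biv_cont: "continuous_on S (\<lambda>p. biv_eval c d (fst p) (snd p))"
  unfolding biv_eval_def by (intro continuous_intros)

lemma biv_cont1: "continuous_on S (\<lambda>y. biv_eval c d x y)"
  unfolding biv_eval_def by (intro continuous_intros)

lemma biv_at0: "biv_eval c d x 0 = poly (c 0) x"
  unfolding biv_eval_def by (simp add: power_0_left if_distrib sum.delta cong: if_cong)


lemma mono3: fixes d a A b Bb :: real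
  shows "0 \<le> d \<Longrightarrow> 0 \<le> a \<Longrightarrow> a \<le> A \<Longrightarrow> 0 \<le> b \<Longrightarrow> b \<le> Bb \<Longrightarrow> d * a * b \<le> d * A * Bb"
  by (intro mult_mono mult_left_mono) (auto intro: order_trans)

lemma main_case:
  fixes d :: nat and c :: "nat \<Rightarrow> real poly" and U :: "real set"
  assumes cU: "compact U" and Une: "U \<noteq> {}" and d1: "d \<ge> 1"
    and nonneg: "\<And>x y. x \<in> U \<Longrightarrow> biv_eval c d x y \<ge> 0"
    and fin: "finite {(x, y). x \<in> U \<and> biv_eval c d x y = 0}"
    and lead: "\<And>x. x \<in> U \<Longrightarrow> poly (c (2*d)) x > 0"
  shows "\<exists>\<epsilon> :: real poly.
           (\<forall>x\<in>U. poly \<epsilon> x \<ge> 0) \<and>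
           (\<forall>x\<in>U. \<forall>y. biv_eval c d x y \<ge> poly \<epsilon> x * (1 + y^2) ^ d) \<and>
           (\<forall>x\<in>U. poly \<epsilon> x = 0 \<longleftrightarrow> (\<exists>y. biv_eval c d x y = 0))"
proof -
  define f where "f = biv_eval c d"
  define Fp :: "real poly poly" where "Fp = (\<Sum>i\<le>2*d. monom (c i) i)"
  have fev: "f x y = ev2 Fp x y" for x y unfolding f_def Fp_def by (rule biv_ev2)
  have coeffF: "coeff Fp j = (if j \<le> 2*d then c j else 0)" for j
    unfolding Fp_def by (simp add: coeff_sum)
  obtain x0 where x0: "x0 \<in> U" using Une by auto
  have c2d0: "c (2*d) \<noteq> 0" using lead[OF x0] by auto
  define G where "G = pderiv Fp"
  have coeffG: "coeff G j = of_nat (Suc j) * (if Suc j \<le> 2*d then c (Suc j) else 0)" for j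
    unfolding G_def coeff_pderiv coeffF ..
  have degG: "degree G = 2*d - 1"
  proof (rule antisym)
    show "degree G \<le> 2*d-1" by (rule degree_le) (auto simp: coeffG)
    have "coeff G (2*d-1) \<noteq> 0" using d1 c2d0 by (simp add: coeffG)
    thus "2*d-1 \<le> degree G" by (rule le_degree)
  qed
  have LcG: "lead_coeff G = of_nat (2*d) * c (2*d)" using d1 by (simp add: degG coeffG)
  define Lc where "Lc = lead_coeff G"
  have Lpos: "poly Lc x > 0" if "x \<in> U" for x
    using lead[OF that] d1 unfolding Lc_def LcG by (simp add: of_nat_poly)
  obtain ch K n where ch1: "coeff ch n = 1" and chd: "degree ch = n"
    and chroot: "\<And>x z. ev2 G x z = 0 \<Longrightarrow> ev2 ch x (poly Lc x ^ K * ev2 Fp x z) = 0"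
    using eigen_key[of Fp] degG d1 unfolding G_def Lc_def by fastforce
  define j0 where "j0 = (LEAST j. coeff ch j \<noteq> 0)"
  have q0: "coeff ch j0 \<noteq> 0" using ch1 unfolding j0_def by (metis (mono_tags) LeastI zero_neq_one)
  have low: "\<And>j. j < j0 \<Longrightarrow> coeff ch j = 0" unfolding j0_def using not_less_Least by blast
  define q where "q = coeff ch j0"
  have qne: "q \<noteq> 0" using q0 unfolding q_def .
  have "continuous_on U (\<lambda>x. \<Sum>j\<le>n. \<bar>poly (coeff ch j) x\<bar>)" by (intro continuous_intros)
  then obtain Sc where Sc: "\<forall>x\<in>U. (\<Sum>j\<le>n. \<bar>poly (coeff ch j) x\<bar>) \<le> Sc"
    using cont_bound[OF cU] by blast
  have "continuous_on U (\<lambda>x. poly Lc x)" by (intro continuous_intros)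
  then obtain Lm where Lm: "\<forall>x\<in>U. poly Lc x \<le> Lm"
    using cont_bound[OF cU] by blast
  have "continuous_on U (\<lambda>x. \<bar>poly q x\<bar>)" by (intro continuous_intros)
  then obtain Qm where Qm: "\<forall>x\<in>U. \<bar>poly q x\<bar> \<le> Qm"
    using cont_bound[OF cU] by blast
  have "continuous_on U (\<lambda>x. poly (c (2*d)) x)" by (intro continuous_intros)
  then obtain lo where lo: "lo > 0" "\<forall>x\<in>U. poly (c (2*d)) x \<ge> lo"
    using cont_posmin[OF cU, of "poly (c (2*d))"] lead by blast
  have "continuous_on U (\<lambda>x. \<Sum>i<2*d. \<bar>poly (c i) x\<bar>)" by (intro continuous_intros)
  then obtain B0 where B0: "\<forall>x\<in>U. (\<Sum>i<2*d. \<bar>poly (c i) x\<bar>) \<le> B0"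
    using cont_bound[OF cU] by blast
  have "continuous_on U (\<lambda>x. poly (c 0) x)" by (intro continuous_intros)
  then obtain M0 where M0: "\<forall>x\<in>U. poly (c 0) x \<le> M0"
    using cont_bound[OF cU] by blast
  have "continuous_on U (\<lambda>x. \<bar>x\<bar>)" by (intro continuous_intros)
  then obtain Bu where Bu: "\<forall>x\<in>U. \<bar>x\<bar> \<le> Bu"
    using cont_bound[OF cU] by blast
  define B where "B = max B0 0"
  define \<alpha> where "\<alpha> = lo/2^(Suc d)"
  define R where "R = max 1 (2*B/lo)"
  have apos: "\<alpha> > 0" unfolding \<alpha>_def using lo by simp
  have R1: "R \<ge> 1" unfolding R_def by simp
  have large: "f x y \<ge> \<alpha>*(1+y^2)^d" if "x \<in> U" "\<bar>y\<bar> \<ge> R" for x y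
    unfolding f_def \<alpha>_def
    by (rule large_y[of lo B]) (use that lo B0 in \<open>auto simp: B_def R_def\<close>)
  define R2 where "R2 = max R (\<bar>M0\<bar>/\<alpha> + 1)"
  have far: "f x y > M0" if x: "x \<in> U" and y: "\<bar>y\<bar> \<ge> R2" for x y
  proof -
    have yR: "\<bar>y\<bar> \<ge> R" and y1: "\<bar>y\<bar> \<ge> 1" using y R1 unfolding R2_def by auto
    have "1 + of_nat d * y^2 \<le> (1 + y^2)^d" by (rule Bernoulli_inequality) (use zero_le_power2[of y] in linarith)
    moreover have "y^2 \<le> of_nat d * y^2" using d1 by (simp add: mult_le_cancel_right1)
    moreover have "\<bar>y\<bar> \<le> y^2"
    proof -
      have "\<bar>y\<bar> * 1 \<le> \<bar>y\<bar> * \<bar>y\<bar>" by (rule mult_left_mono[OF y1]) simp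
      thus ?thesis by (simp add: power2_eq_square)
    qed
    ultimately have "\<bar>y\<bar> \<le> (1+y^2)^d" by linarith
    hence "\<alpha> * \<bar>y\<bar> \<le> \<alpha> * (1+y^2)^d" using apos by simp
    moreover have "\<alpha> * \<bar>y\<bar> \<ge> \<alpha> * R2" using y apos by simp
    moreover have "\<alpha> * R2 > \<bar>M0\<bar>"
    proof -
      have "\<alpha> * R2 \<ge> \<alpha> * (\<bar>M0\<bar>/\<alpha> + 1)" unfolding R2_def using apos by (simp add: mult_left_mono)
      also have "\<alpha> * (\<bar>M0\<bar>/\<alpha> + 1) = \<bar>M0\<bar> + \<alpha>" using apos by (simp add: field_simps)
      finally show ?thesis using apos by linarith
    qed
    ultimately show ?thesis using large[OF x yR] by linarith
  qed
  have gmin: "\<exists>ys. \<forall>y. f x ys \<le> f x y" if x: "x \<in> U" for x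
  proof -
    have "R2 \<ge> 1" using R1 unfolding R2_def by simp
    hence ne: "{-R2..R2} \<noteq> {}" by auto
    obtain ys where ys: "ys \<in> {-R2..R2}" "\<forall>y\<in>{-R2..R2}. f x ys \<le> f x y"
      using continuous_attains_inf[OF compact_Icc ne biv_cont1[of _ c d x]] unfolding f_def by blast
    have "0 \<in> {-R2..R2}" using \<open>R2 \<ge> 1\<close> by simp
    hence "f x ys \<le> f x 0" using ys by blast
    also have "f x 0 \<le> M0" using M0 x unfolding f_def biv_at0 by simp
    finally have ysM: "f x ys \<le> M0" .
    have "f x ys \<le> f x y" for y
    proof (cases "y \<in> {-R2..R2}")
      case True thus ?thesis using ys by blast
    next
      case False hence "\<bar>y\<bar> \<ge> R2" by auto
      thus ?thesis using far[OF x] ysM by fastforce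
    qed
    thus ?thesis by blast
  qed
  define Sc' where "Sc' = max Sc 1"
  define Qm' where "Qm' = max Qm 1"
  define Lm' where "Lm' = max Lm 1"
  define C where "C = Lm' ^ K * Sc' * Qm'"
  have Cpos: "C > 0" unfolding C_def Sc'_def Qm'_def Lm'_def by simp
  have loj: "\<bar>poly q x\<bar> \<le> C * f x y" if x: "x \<in> U" and nz: "\<not>(\<exists>y. f x y = 0)" for x y
  proof -
    obtain ys where ys: "\<forall>y. f x ys \<le> f x y" using gmin[OF x] by blast
    define m where "m = f x ys"
    have mpos: "m > 0" proof -
      have "f x ys \<noteq> 0" using nz by blast
      thus ?thesis using nonneg[OF x, of ys] unfolding m_def f_def by linarith
    qed
    define P where "P = map_poly (\<lambda>p. poly p x) Fp"
    have fP: "f x y = poly P y" for y unfolding fev P_def ev2_def ..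
    have "poly (pderiv P) ys = 0"
      by (rule DERIV_local_min[OF poly_DERIV[of P ys], of 1]) (use ys in \<open>auto simp: fP\<close>)
    hence "ev2 G x ys = 0" unfolding ev2_def G_def P_def poly_hom.map_poly_pderiv .
    from chroot[OF this] have root: "ev2 ch x (poly Lc x ^ K * m) = 0" unfolding m_def fev .
    define lam where "lam = poly Lc x ^ K * m"
    have Lx: "poly Lc x > 0" using Lpos[OF x] .
    have lpos: "lam > 0" unfolding lam_def using Lx mpos by simp
    have qS: "\<bar>poly q x\<bar> \<le> lam * Sc' * Qm'"
    proof (cases "lam \<le> 1")
      case True
      have "\<bar>coeff (map_poly (\<lambda>p. poly p x) ch) j0\<bar> \<le> lam * (\<Sum>j\<le>n. \<bar>coeff (map_poly (\<lambda>p. poly p x) ch) j\<bar>)"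
      proof (rule root_small)
        show "coeff (map_poly (\<lambda>p. poly p x) ch) j = 0" if "j < j0" for j
          using low[OF that] by (simp add: coeff_map_poly)
        show "poly (map_poly (\<lambda>p. poly p x) ch) lam = 0" using root unfolding ev2_def lam_def .
        show "degree (map_poly (\<lambda>p. poly p x) ch) \<le> n" using degree_map_poly_le[of _ ch] chd by simp
      qed (use lpos True in auto)
      hence "\<bar>poly q x\<bar> \<le> lam * (\<Sum>j\<le>n. \<bar>poly (coeff ch j) x\<bar>)" by (simp add: coeff_map_poly q_def)
      also have "\<dots> \<le> lam * Sc'" using Sc x lpos unfolding Sc'_def by (intro mult_left_mono) auto
      also have "\<dots> \<le> lam * Sc' * Qm'"
      proof -
        have "0 \<le> lam*Sc'" using lpos unfolding Sc'_def by simp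
        moreover have "1 \<le> Qm'" unfolding Qm'_def by simp
        ultimately show ?thesis using mult_left_mono[of 1 Qm' "lam*Sc'"] by simp
      qed
      finally show ?thesis .
    next
      case False
      have "\<bar>poly q x\<bar> \<le> Qm'" using Qm x unfolding Qm'_def by force
      also have "\<dots> \<le> lam * Sc' * Qm'"
      proof -
        have "1*1 \<le> lam * Sc'" by (rule mult_mono) (use False in \<open>auto simp: Sc'_def\<close>)
        hence "1 \<le> lam * Sc'" by simp
        thus ?thesis unfolding Qm'_def by (simp add: mult_le_cancel_right1)
      qed
      finally show ?thesis .
    qed
    have "poly Lc x ^ K \<le> Lm' ^ K" using Lx Lm x unfolding Lm'_def
      by (intro power_mono) auto
    hence "lam \<le> Lm' ^ K * m" unfolding lam_def using mpos by (simp add: mult_right_mono)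
    hence "lam * Sc' * Qm' \<le> Lm' ^ K * m * Sc' * Qm'" unfolding Sc'_def Qm'_def
      by (simp add: mult_right_mono)
    also have "\<dots> = C * m" unfolding C_def by simp
    also have "C * m \<le> C * f x y" using ys Cpos unfolding m_def by simp
    finally show ?thesis using qS by linarith
  qed
  define Z where "Z = {x\<in>U. \<exists>y. f x y = 0}"
  have finZ: "finite Z"
  proof -
    have "Z \<subseteq> fst ` {(x, y). x \<in> U \<and> biv_eval c d x y = 0}"
      unfolding Z_def f_def by (auto simp: image_iff)
    thus ?thesis using fin finite_subset by blast
  qed
  have "\<forall>z\<in>Z. \<exists>s. q = [:-z,1:]^order z q * s \<and> poly s z \<noteq> 0"
  proof
    fix z
    obtain s where "q = [:-z,1:]^order z q * s" "\<not> [:-z,1:] dvd s" using order_decomp[OF qne] by blast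
    thus "\<exists>s. q = [:-z,1:]^order z q * s \<and> poly s z \<noteq> 0" by (auto simp: poly_eq_0_iff_dvd)
  qed
  then obtain s where s: "\<And>z. z \<in> Z \<Longrightarrow> q = [:-z,1:]^order z q * s z \<and> poly (s z) z \<noteq> 0"
    by metis
  have "\<forall>z\<in>Z. \<exists>r>0. \<forall>x. \<bar>x - z\<bar> < r \<longrightarrow> \<bar>poly (s z) x\<bar> \<ge> \<bar>poly (s z) z\<bar>/2"
  proof
    fix z assume z: "z \<in> Z"
    have pos: "\<bar>poly (s z) z\<bar>/2 > 0" using s[OF z] by simp
    have "isCont (poly (s z)) z" by simp
    hence "poly (s z) \<midarrow>z\<rightarrow> poly (s z) z" by (simp add: isCont_def)
    from LIM_D[OF this pos] obtain r where r: "r > 0"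
      "\<And>x. x \<noteq> z \<and> norm (x - z) < r \<Longrightarrow> norm (poly (s z) x - poly (s z) z) < \<bar>poly (s z) z\<bar>/2"
      by blast
    have "\<bar>poly (s z) x\<bar> \<ge> \<bar>poly (s z) z\<bar>/2" if "\<bar>x - z\<bar> < r" for x
    proof (cases "x = z")
      case True thus ?thesis by simp
    next
      case False
      hence "\<bar>poly (s z) x - poly (s z) z\<bar> < \<bar>poly (s z) z\<bar>/2" using r(2)[of x] that by simp
      thus ?thesis by linarith
    qed
    thus "\<exists>r>0. \<forall>x. \<bar>x - z\<bar> < r \<longrightarrow> \<bar>poly (s z) x\<bar> \<ge> \<bar>poly (s z) z\<bar>/2" using r(1) by blast
  qed
  then obtain r where r: "\<And>z. z \<in> Z \<Longrightarrow> r z > 0 \<and> (\<forall>x. \<bar>x - z\<bar> < r z \<longrightarrow> \<bar>poly (s z) x\<bar> \<ge> \<bar>poly (s z) z\<bar>/2)"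
    by metis
  define \<rho> where "\<rho> = Min (insert 1 (r ` Z))"
  have rho: "\<rho> > 0" "\<rho> \<le> 1" "\<And>z. z \<in> Z \<Longrightarrow> \<rho> \<le> r z"
    unfolding \<rho>_def using finZ r by (auto simp: Min_gr_iff)
  define \<gamma> where "\<gamma> = Min (insert 1 ((\<lambda>z. \<bar>poly (s z) z\<bar>/2) ` Z))"
  have gam1: "\<gamma> > 0"
    unfolding \<gamma>_def using finZ s by (auto simp: Min_gr_iff)
  have gam2: "\<gamma> \<le> \<bar>poly (s z) z\<bar>/2" if "z \<in> Z" for z
    unfolding \<gamma>_def by (rule Min_le) (use finZ that in auto)
  note gam = gam1 gam2
  define N where "N = (\<Sum>z\<in>Z. order z q)"
  define e where "e = 2 * Suc N"
  have ordle: "order z q \<le> e" if "z \<in> Z" for z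
  proof -
    have "order z q \<le> N" unfolding N_def by (rule member_le_sum) (use that finZ in auto)
    thus ?thesis unfolding e_def by simp
  qed
  have eeven: "even e" and epos: "e > 0" unfolding e_def by auto
  have near: "\<bar>poly q x\<bar> \<ge> \<gamma> * \<bar>x - z\<bar>^e" if z: "z \<in> Z" and xz: "\<bar>x - z\<bar> < \<rho>" for x z
  proof -
    have qz: "q = [:-z,1:]^order z q * s z" using s[OF z] by blast
    have "poly q x = (x - z)^order z q * poly (s z) x"
      by (subst qz) (simp add: poly_power)
    hence eq: "\<bar>poly q x\<bar> = \<bar>x - z\<bar>^order z q * \<bar>poly (s z) x\<bar>" by (simp add: abs_mult power_abs)
    have "\<bar>x - z\<bar> \<le> 1" using xz rho by linarith
    hence p: "\<bar>x - z\<bar>^e \<le> \<bar>x - z\<bar>^order z q" by (intro power_decreasing ordle z) auto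
    have "\<bar>x - z\<bar> < r z" using xz rho(3)[OF z] by linarith
    hence "\<bar>poly (s z) z\<bar>/2 \<le> \<bar>poly (s z) x\<bar>" using r[OF z] by blast
    hence g: "\<gamma> \<le> \<bar>poly (s z) x\<bar>" using gam(2)[OF z] by linarith
    have "\<gamma> * \<bar>x - z\<bar>^e \<le> \<bar>poly (s z) x\<bar> * \<bar>x - z\<bar>^order z q"
      by (rule mult_mono[OF g p]) (use gam in auto)
    thus ?thesis unfolding eq by (simp add: mult.commute)
  qed
  define Sd where "Sd = 2 * \<bar>Bu\<bar> + 1"
  have Sd1: "Sd \<ge> 1" unfolding Sd_def by simp
  have Sdb: "\<bar>x - w\<bar> \<le> Sd" if "x \<in> U" "w \<in> U" for x w
  proof -
    have "\<bar>x\<bar> \<le> Bu" "\<bar>w\<bar> \<le> Bu" using Bu that by auto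
    thus ?thesis using abs_triangle_ineq4[of x w] abs_ge_self[of Bu] unfolding Sd_def by linarith
  qed
  define E where "E = Sd ^ (e * card Z)"
  have E1: "E \<ge> 1" unfolding E_def using Sd1 by simp
  define Pr where "Pr x = (\<Prod>w\<in>Z. \<bar>x - w\<bar>^e)" for x
  have Pr0: "Pr x \<ge> 0" for x unfolding Pr_def by (simp add: prod_nonneg)
  have ZU: "Z \<subseteq> U" unfolding Z_def by auto
  have powb: "\<bar>x - w\<bar>^e \<le> Sd^e" if "x \<in> U" "w \<in> Z" for x w
  proof -
    have "w \<in> U" using that ZU by auto
    thus ?thesis by (intro power_mono Sdb that) auto
  qed
  have PrE: "Pr x \<le> E" if x: "x \<in> U" for x
  proof -
    have "Pr x \<le> (\<Prod>w\<in>Z. Sd^e)" unfolding Pr_def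
      by (rule prod_mono) (use powb x in auto)
    also have "\<dots> = E" unfolding E_def by (simp add: power_mult)
    finally show ?thesis .
  qed
  have Prnear: "Pr x \<le> \<bar>x - z\<bar>^e * E" if x: "x \<in> U" and z: "z \<in> Z" for x z
  proof -
    have eq: "Pr x = \<bar>x - z\<bar>^e * (\<Prod>w\<in>Z-{z}. \<bar>x - w\<bar>^e)" unfolding Pr_def
      using prod.remove[OF finZ z] by simp
    have "(\<Prod>w\<in>Z-{z}. \<bar>x - w\<bar>^e) \<le> (\<Prod>w\<in>Z-{z}. Sd^e)"
      by (rule prod_mono) (use powb x in auto)
    also have "\<dots> = Sd ^ (e * card (Z - {z}))" by (simp add: power_mult)
    also have "\<dots> \<le> E" unfolding E_def
      by (rule power_increasing) (use Sd1 finZ card_mono[OF finZ, of "Z-{z}"] in auto)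
    finally have "(\<Prod>w\<in>Z-{z}. \<bar>x - w\<bar>^e) \<le> E" .
    thus ?thesis unfolding eq by (simp add: mult_left_mono)
  qed
  have Prz: "Pr x = 0 \<longleftrightarrow> x \<in> Z" for x unfolding Pr_def using finZ epos by auto
  define V where "V = U \<inter> (\<Inter>z\<in>Z. - ball z \<rho>)"
  have cV: "compact V" unfolding V_def
    by (rule compact_Int_closed[OF cU]) (auto intro!: closed_INT closed_Compl)
  have "\<exists>\<mu>>0. \<forall>p\<in>V \<times> {-R..R}. biv_eval c d (fst p) (snd p) \<ge> \<mu>"
  proof (rule cont_posmin)
    show "compact (V \<times> {-R..R})" by (rule compact_Times[OF cV compact_Icc])
    show "continuous_on (V \<times> {-R..R}) (\<lambda>p. biv_eval c d (fst p) (snd p))" by (rule biv_cont)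
    fix p assume p: "p \<in> V \<times> {-R..R}"
    hence xU: "fst p \<in> U" unfolding V_def by auto
    have "fst p \<notin> Z"
    proof
      assume h: "fst p \<in> Z"
      from p have "fst p \<in> V" by auto
      hence "fst p \<notin> ball (fst p) \<rho>" using h unfolding V_def by blast
      thus False using rho(1) by simp
    qed
    hence "biv_eval c d (fst p) (snd p) \<noteq> 0" using xU unfolding Z_def f_def by blast
    thus "biv_eval c d (fst p) (snd p) > 0" using nonneg[OF xU, of "snd p"] by linarith
  qed
  then obtain \<mu> where mu: "\<mu> > 0" "\<And>x y. x \<in> V \<Longrightarrow> \<bar>y\<bar> \<le> R \<Longrightarrow> f x y \<ge> \<mu>"
    unfolding f_def by force
  define W where "W = (1 + R^2)^d"
  have W1: "W \<ge> 1" unfolding W_def by simp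
  have yW: "(1 + y^2)^d \<le> W" if "\<bar>y\<bar> \<le> R" for y
  proof -
    have "\<bar>y\<bar>^2 \<le> R^2" by (rule power_mono) (use that in auto)
    hence "y^2 \<le> R^2" by simp
    thus ?thesis unfolding W_def by (intro power_mono) auto
  qed
  define \<delta> where "\<delta> = min (\<alpha>/E) (min (\<mu>/(W*E)) (\<gamma>/(C*W*E)))"
  have Epos: "E > 0" and Wpos: "W > 0" using E1 W1 by auto
  have dpos: "\<delta> > 0" unfolding \<delta>_def using apos Epos Wpos mu gam Cpos by simp
  define \<epsilon> where "\<epsilon> = Polynomial.smult \<delta> (\<Prod>w\<in>Z. [:-w,1:]^e)"
  have pprod: "poly (\<Prod>w\<in>Z. [:-w,1:]^e) x = (\<Prod>w\<in>Z. (x - w)^e)" for x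
    by (simp add: poly_prod poly_power)
  have peps: "poly \<epsilon> x = \<delta> * Pr x" for x
    unfolding \<epsilon>_def Pr_def poly_smult pprod using eeven by (simp add: power_even_abs)
  show ?thesis
  proof (intro exI[of _ \<epsilon>] conjI ballI allI)
    fix x assume x: "x \<in> U"
    show "poly \<epsilon> x \<ge> 0" unfolding peps using dpos Pr0[of x] by simp
  next
    fix x assume x: "x \<in> U"
    show "poly \<epsilon> x = 0 \<longleftrightarrow> (\<exists>y. biv_eval c d x y = 0)"
      unfolding peps using dpos Prz[of x] x unfolding Z_def f_def by auto
  next
    fix x y assume x: "x \<in> U"
    have fy: "f x y \<ge> \<delta> * Pr x * (1+y^2)^d"
    proof (cases "x \<in> Z")
      case True
      hence "Pr x = 0" using Prz by simp
      thus ?thesis using nonneg[OF x, of y] unfolding f_def by simp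
    next
      case xZ: False
      show ?thesis
      proof (cases "\<bar>y\<bar> \<ge> R")
        case True
        have "\<delta> * Pr x \<le> (\<alpha>/E) * E"
          by (rule mult_mono) (use apos Epos Pr0[of x] PrE[OF x] in \<open>auto simp: \<delta>_def\<close>)
        hence "\<delta> * Pr x * (1+y^2)^d \<le> (\<alpha>/E) * E * (1+y^2)^d"
          by (rule mult_right_mono) simp
        also have "\<dots> = \<alpha> * (1+y^2)^d" using Epos by simp
        finally show ?thesis using large[OF x True] by linarith
      next
        case False
        hence yW': "(1+y^2)^d \<le> W" using yW by simp
        have nz: "\<not>(\<exists>y. f x y = 0)" using xZ x unfolding Z_def by blast
        show ?thesis
        proof (cases "x \<in> V")
          case True
          have "\<delta> * Pr x * (1+y^2)^d \<le> \<delta> * E * W"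
            by (rule mono3) (use dpos Pr0[of x] PrE[OF x] yW' in auto)
          also have "\<dots> = \<delta> * (W * E)" by simp
          also have "\<dots> \<le> \<mu>" using Epos Wpos unfolding \<delta>_def
            by (simp add: pos_le_divide_eq[symmetric] min_le_iff_disj)
          finally show ?thesis using mu(2)[OF True, of y] False by linarith
        next
          case False
          then obtain z where z: "z \<in> Z" and xz: "\<bar>x - z\<bar> < \<rho>"
            using x unfolding V_def by (auto simp: dist_real_def abs_minus_commute)
          have "\<delta> * Pr x * (1+y^2)^d \<le> \<delta> * (\<bar>x - z\<bar>^e * E) * W"
            by (rule mono3) (use dpos Pr0[of x] Prnear[OF x z] yW' in auto)
          also have "\<dots> = (\<delta> * (C*W*E)) * \<bar>x - z\<bar>^e / C" using Cpos by (simp add: field_simps)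
          also have "\<delta> * (C*W*E) \<le> \<gamma>" using Epos Wpos Cpos unfolding \<delta>_def
            by (simp add: pos_le_divide_eq[symmetric] min_le_iff_disj)
          hence "(\<delta> * (C*W*E)) * \<bar>x - z\<bar>^e / C \<le> \<gamma> * \<bar>x - z\<bar>^e / C"
            using Cpos by (intro divide_right_mono mult_right_mono) auto
          also have "\<dots> \<le> \<bar>poly q x\<bar> / C" using near[OF z xz] Cpos by (simp add: divide_right_mono)
          also have "\<dots> \<le> f x y" using loj[OF x nz, of y] Cpos by (simp add: pos_divide_le_eq mult.commute)
          finally show ?thesis .
        qed
      qed
    qed
    thus "biv_eval c d x y \<ge> poly \<epsilon> x * (1 + y^2) ^ d" unfolding peps f_def by simp
  qed
qed


theorem lemma4:
  fixes k d :: nat and a b :: "nat \<Rightarrow> real" and c :: "nat \<Rightarrow> real poly" and U :: "real set"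
  assumes U_def: "U = (\<Union>i\<in>{1..k}. {a i..b i})"
    and ab: "\<And>i. i \<in> {1..k} \<Longrightarrow> a i \<le> b i"
    and ba: "\<And>i. i \<in> {1..<k} \<Longrightarrow> b i < a (Suc i)"
    and nonneg: "\<And>x y. x \<in> U \<Longrightarrow> biv_eval c d x y \<ge> 0"
    and fin: "finite {(x, y). x \<in> U \<and> biv_eval c d x y = 0}"
    and lead: "\<And>x. x \<in> U \<Longrightarrow> poly (c (2*d)) x > 0"
  shows "\<exists>\<epsilon> :: real poly.
           (\<forall>x\<in>U. poly \<epsilon> x \<ge> 0) \<and>
           (\<forall>x\<in>U. \<forall>y. biv_eval c d x y \<ge> poly \<epsilon> x * (1 + y^2) ^ d) \<and>
           (\<forall>x\<in>U. poly \<epsilon> x = 0 \<longleftrightarrow> (\<exists>y. biv_eval c d x y = 0))"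
proof (cases "U = {}")
  case True thus ?thesis by (intro exI[of _ 0]) auto
next
  case Une: False
  show ?thesis
  proof (cases "d = 0")
    case True
    have bz: "biv_eval c 0 x y = poly (c 0) x" for x y by (simp add: biv_eval_def)
    have "\<forall>x\<in>U. poly (c 0) x > 0" using lead True by simp
    thus ?thesis by (intro exI[of _ "c 0"]) (auto simp: bz True less_imp_le)
  next
    case False
    have cU: "compact U" unfolding U_def by (intro compact_UN compact_Icc) auto
    show ?thesis by (rule main_case[OF cU Une _ nonneg fin lead]) (use False in auto)
  qed
qed

end
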